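(* Let $\mathcal{C}$ be a linear code over $R$ of type $(n;k,0,\dots,0)$, let $G$ be a generator matrix of $\mathcal{C}$ with rows $u_1,\dots,u_k$, and let $c\in\mathcal{C}$. If $c=\sum_{i=1}^k\alpha_iu_i$ with $\alpha_i\in R$, then $\nu(c)=\min\{\nu(\alpha_1),\dots,\nu(\alpha_k)\}$.
   Context: Let $R$ be a finite commutative chain ring with maximal ideal $\langle\gamma\rangle$ and nilpotency index $s$ (least $s$ with $\gamma^s=0$). A linear code of length $n$ is an $R$-submodule of $R^n$; it has type $(n;k,0,\dots,0)$ when it is a free $R$-module of rank $k$ (more generally type $(n;t_1,\dots,t_s)$ means isomorphic to $\bigoplus_{i=1}^s(R/\langle\gamma^{s-i+1}\rangle)^{t_i}$). Valuation: for $x\in R\setminus\{0\}$, $\nu(x)$ is the largest $m\in\{0,\dots,s-1\}$ with $x=\gamma^m\beta$ for a unit $\beta$; $\nu(0)=\infty$ (larger than every integer). For $x=(x_1,\dots,x_n)\in R^n$, $\nu(x)=\min_i\nu(x_i)$. *)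

theory Defs
  imports Main "HOL-Library.Extended_Nat" "HOL-Library.Function_Algebras"
begin

definition is_ideal :: "'a::comm_ring_1 set \<Rightarrow> bool" where
  "is_ideal I \<longleftrightarrow> 0 \<in> I \<and> (\<forall>x\<in>I. \<forall>y\<in>I. x + y \<in> I) \<and> (\<forall>r. \<forall>x\<in>I. r * x \<in> I)"

definition principal_ideal :: "'a::comm_ring_1 \<Rightarrow> 'a set" where
  "principal_ideal g = {r * g | r. True}"

definition maximal_ideal :: "'a::comm_ring_1 set \<Rightarrow> bool" where
  "maximal_ideal I \<longleftrightarrow> is_ideal I \<and> 1 \<notin> I \<and>
     (\<forall>J. is_ideal J \<and> I \<subseteq> J \<and> 1 \<notin> J \<longrightarrow> J = I)"

definition finite_chain_ring :: "'a::comm_ring_1 itself \<Rightarrow> bool" where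
  "finite_chain_ring _ \<longleftrightarrow> finite (UNIV :: 'a set) \<and> (0::'a) \<noteq> 1 \<and>
     (\<forall>I J :: 'a set. is_ideal I \<and> is_ideal J \<longrightarrow> I \<subseteq> J \<or> J \<subseteq> I)"

definition nil_index :: "'a::comm_ring_1 \<Rightarrow> nat" where
  "nil_index g = (LEAST s. g ^ s = 0)"

definition nu :: "'a::comm_ring_1 \<Rightarrow> 'a \<Rightarrow> enat" where
  "nu g x = (if x = 0 then \<infinity>
     else enat (GREATEST m. m < nil_index g \<and> (\<exists>\<beta>. \<beta> dvd 1 \<and> x = g ^ m * \<beta>)))"

definition vecs :: "nat \<Rightarrow> (nat \<Rightarrow> 'a::zero) set" where
  "vecs n = {v. \<forall>i\<ge>n. v i = 0}"

definition smult_vec :: "'a::times \<Rightarrow> (nat \<Rightarrow> 'a) \<Rightarrow> (nat \<Rightarrow> 'a)" where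
  "smult_vec a v = (\<lambda>i. a * v i)"

definition nu_vec :: "'a::comm_ring_1 \<Rightarrow> nat \<Rightarrow> (nat \<Rightarrow> 'a) \<Rightarrow> enat" where
  "nu_vec g n v = (INF i\<in>{..<n}. nu g (v i))"

definition linear_code :: "nat \<Rightarrow> (nat \<Rightarrow> 'a::comm_ring_1) set \<Rightarrow> bool" where
  "linear_code n C \<longleftrightarrow> C \<subseteq> vecs n \<and> 0 \<in> C \<and>
     (\<forall>x\<in>C. \<forall>y\<in>C. x + y \<in> C) \<and> (\<forall>a. \<forall>x\<in>C. smult_vec a x \<in> C)"

definition R_linear :: "((nat \<Rightarrow> 'a::comm_ring_1) \<Rightarrow> (nat \<Rightarrow> 'a)) \<Rightarrow> (nat \<Rightarrow> 'a) set \<Rightarrow> bool" where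
  "R_linear f V \<longleftrightarrow> (\<forall>x\<in>V. \<forall>y\<in>V. f (x + y) = f x + f y) \<and>
     (\<forall>a. \<forall>x\<in>V. f (smult_vec a x) = smult_vec a (f x))"

text \<open>Type (n;k,0,...,0): C is a free R-module of rank k, i.e. isomorphic to R^k.\<close>
definition code_type_free :: "nat \<Rightarrow> nat \<Rightarrow> (nat \<Rightarrow> 'a::comm_ring_1) set \<Rightarrow> bool" where
  "code_type_free n k C \<longleftrightarrow> linear_code n C \<and>
     (\<exists>f. R_linear f (vecs k) \<and> bij_betw f (vecs k) C)"

definition generator_matrix :: "nat \<Rightarrow> nat \<Rightarrow> (nat \<Rightarrow> nat \<Rightarrow> 'a::comm_ring_1) \<Rightarrow> (nat \<Rightarrow> 'a) set \<Rightarrow> bool" where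
  "generator_matrix n k u C \<longleftrightarrow> (\<forall>i<k. u i \<in> vecs n) \<and>
     C = {(\<Sum>i<k. smult_vec (\<alpha> i) (u i)) | \<alpha>. True}"

end

theory Submission
  imports Defs
begin

lemma idI: "is_ideal (principal_ideal (x::'a::comm_ring_1))"
  unfolding is_ideal_def principal_ideal_def
proof (intro conjI ballI allI)
  show "0 \<in> {r * x |r. True}" by (metis (mono_tags) mem_Collect_eq mult_zero_left)
next
  fix a b assume "a \<in> {r * x |r. True}" "b \<in> {r * x |r. True}"
  then obtain r1 r2 where "a = r1 * x" "b = r2 * x" by blast
  then have "a + b = (r1 + r2) * x" by (simp add: distrib_right)
  then show "a + b \<in> {r * x |r. True}" by blast
next
  fix r a assume "a \<in> {r * x |r. True}"
  then obtain r1 where "a = r1 * x" by blast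
  then have "r * a = (r * r1) * x" by (simp add: mult.assoc)
  then show "r * a \<in> {r * x |r. True}" by blast
qed

lemma pi_iff: "y \<in> principal_ideal x \<longleftrightarrow> x dvd y"
  unfolding principal_ideal_def dvd_def by (auto simp: mult.commute)

lemma gamma_not_unit:
  fixes \<gamma> :: "'a::comm_ring_1"
  assumes mx: "maximal_ideal (principal_ideal \<gamma>)"
  shows "\<not> \<gamma> dvd 1"
  using mx pi_iff[of 1 \<gamma>] unfolding maximal_ideal_def by blast

lemma fun_sum_apply: "(sum f A) x = sum (\<lambda>i. f i x) A"
  by (induction A rule: infinite_finite_induct) auto

lemma not_unit_in_M:
  fixes \<gamma> x :: "'a::comm_ring_1"
  assumes fcr: "finite_chain_ring TYPE('a)"
    and mx: "maximal_ideal (principal_ideal \<gamma>)"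
    and nu: "\<not> x dvd 1"
  shows "\<gamma> dvd x"
proof -
  have idM: "is_ideal (principal_ideal \<gamma>)" using mx by (simp add: maximal_ideal_def)
  have n1: "1 \<notin> principal_ideal x" using nu pi_iff[of 1 x] by simp
  have xI: "x \<in> principal_ideal x" using pi_iff[of x x] by simp
  from fcr idI[of x] idM have "principal_ideal x \<subseteq> principal_ideal \<gamma> \<or> principal_ideal \<gamma> \<subseteq> principal_ideal x"
    unfolding finite_chain_ring_def by blast
  then have "x \<in> principal_ideal \<gamma>"
  proof
    assume "principal_ideal x \<subseteq> principal_ideal \<gamma>" then show ?thesis using xI by blast
  next
    assume h: "principal_ideal \<gamma> \<subseteq> principal_ideal x"
    have "\<forall>J. is_ideal J \<and> principal_ideal \<gamma> \<subseteq> J \<and> 1 \<notin> J \<longrightarrow> J = principal_ideal \<gamma>"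
      using mx unfolding maximal_ideal_def by blast
    then have "principal_ideal x = principal_ideal \<gamma>" using idI[of x] n1 h by blast
    then show ?thesis using xI by simp
  qed
  then show ?thesis using pi_iff[of x \<gamma>] by simp
qed
lemma gamma_nilp:
  fixes \<gamma> :: "'a::comm_ring_1"
  assumes fcr: "finite_chain_ring TYPE('a)"
    and mx: "maximal_ideal (principal_ideal \<gamma>)"
  shows "\<exists>s. \<gamma> ^ s = 0"
proof -
  have fin: "finite (UNIV :: 'a set)" using fcr by (simp add: finite_chain_ring_def)
  have "\<not> inj (\<lambda>m::nat. \<gamma> ^ m)"
  proof
    assume i: "inj (\<lambda>m::nat. \<gamma> ^ m)"
    have "finite (range (\<lambda>m::nat. \<gamma> ^ m))" using finite_subset[OF subset_UNIV fin] .
    then have "finite (UNIV :: nat set)" using finite_imageD i by blast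
    then show False by simp
  qed
  then obtain a0 b0 :: nat where ab0: "a0 \<noteq> b0" "\<gamma> ^ a0 = \<gamma> ^ b0"
    unfolding inj_def by blast
  have "\<exists>a b::nat. a < b \<and> \<gamma> ^ a = \<gamma> ^ b"
  proof (cases "a0 < b0")
    case True then show ?thesis using ab0 by blast
  next
    case False then have "b0 < a0" using ab0(1) by simp
    then show ?thesis using ab0(2) by (intro exI[of _ b0] exI[of _ a0]) simp
  qed
  then obtain a b :: nat where ab: "a < b" "\<gamma> ^ a = \<gamma> ^ b" by blast
  define d where "d = b - a"
  have d: "d \<ge> 1" "b = a + d" using ab by (auto simp: d_def)
  have z: "\<gamma> ^ a * (1 - \<gamma> ^ d) = 0"
  proof -
    have "\<gamma> ^ a * (1 - \<gamma> ^ d) = \<gamma> ^ a - \<gamma> ^ (a + d)" by (simp add: right_diff_distrib power_add)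
    then show ?thesis using ab(2) d(2) by simp
  qed
  have "(1 - \<gamma> ^ d) dvd 1"
  proof (rule ccontr)
    assume "\<not> (1 - \<gamma> ^ d) dvd 1"
    then have "\<gamma> dvd 1 - \<gamma> ^ d" using not_unit_in_M[OF fcr mx] by blast
    moreover have "\<gamma> dvd \<gamma> ^ d" using d by (simp add: dvd_power)
    ultimately have "\<gamma> dvd (1 - \<gamma> ^ d) + \<gamma> ^ d" by (rule dvd_add)
    then have "\<gamma> dvd 1" by simp
    then show False using gamma_not_unit[OF mx] by simp
  qed
  then obtain v where v: "1 = (1 - \<gamma> ^ d) * v" by (auto simp: dvd_def)
  have "\<gamma> ^ a = \<gamma> ^ a * ((1 - \<gamma> ^ d) * v)" using v by simp
  also have "\<dots> = (\<gamma> ^ a * (1 - \<gamma> ^ d)) * v" by (simp add: mult.assoc)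
  also have "\<dots> = 0" using z by simp
  finally show ?thesis by blast
qed

locale chainR =
  fixes \<gamma> :: "'a::comm_ring_1"
  assumes fcr: "finite_chain_ring TYPE('a)"
    and mx: "maximal_ideal (principal_ideal \<gamma>)"
begin

definition "s = nil_index \<gamma>"

lemma gs0: "\<gamma> ^ s = 0"
  unfolding s_def nil_index_def using gamma_nilp[OF fcr mx] by (rule LeastI_ex)

lemma gt_ne: "t < s \<Longrightarrow> \<gamma> ^ t \<noteq> 0"
  unfolding s_def nil_index_def using not_less_Least by blast

lemma zero_ne_one': "(0::'a) \<noteq> 1" using fcr by (simp add: finite_chain_ring_def)

lemma s_pos: "s \<ge> 1"
  using gs0 zero_ne_one' by (cases s) auto

lemma pow_big: "m \<ge> s \<Longrightarrow> \<gamma> ^ m = 0"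
  using gs0 by (metis le_add_diff_inverse mult_zero_left power_add)

lemma dvd_bound: "x \<noteq> 0 \<Longrightarrow> \<gamma> ^ m dvd x \<Longrightarrow> m < s"
proof (rule ccontr)
  assume x: "x \<noteq> 0" and d: "\<gamma> ^ m dvd x" and "\<not> m < s"
  then have "\<gamma> ^ m = 0" using pow_big by simp
  then show False using x d by simp
qed

lemma max_dvd:
  assumes x: "x \<noteq> 0"
  defines "m' \<equiv> GREATEST m. \<gamma> ^ m dvd x"
  shows "\<gamma> ^ m' dvd x" "\<And>m. \<gamma> ^ m dvd x \<Longrightarrow> m \<le> m'"
    "\<exists>\<beta>. \<beta> dvd 1 \<and> x = \<gamma> ^ m' * \<beta>" "m' < s"
proof -
  have b: "\<And>m. \<gamma> ^ m dvd x \<Longrightarrow> m \<le> s" using dvd_bound[OF x] less_imp_le by blast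
  have g0: "\<gamma> ^ 0 dvd x" by simp
  show g: "\<gamma> ^ m' dvd x" unfolding m'_def
    using GreatestI_nat[of "\<lambda>m. \<gamma> ^ m dvd x" 0 s, OF g0 b] by blast
  show le: "\<And>m. \<gamma> ^ m dvd x \<Longrightarrow> m \<le> m'" unfolding m'_def
    using Greatest_le_nat[of "\<lambda>m. \<gamma> ^ m dvd x" _ s, OF _ b] by blast
  show "m' < s" using dvd_bound[OF x g] .
  from g obtain y where y: "x = \<gamma> ^ m' * y" by (auto simp: dvd_def)
  have "y dvd 1"
  proof (rule ccontr)
    assume "\<not> y dvd 1"
    then have "\<gamma> dvd y" using not_unit_in_M[OF fcr mx] by blast
    then have "\<gamma> ^ Suc m' dvd x" using y by (simp add: mult_dvd_mono mult.commute)
    then have "Suc m' \<le> m'" by (rule le)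
    then show False by simp
  qed
  then show "\<exists>\<beta>. \<beta> dvd 1 \<and> x = \<gamma> ^ m' * \<beta>" using y by blast
qed

lemma nu_ge_iff: "enat m \<le> nu \<gamma> x \<longleftrightarrow> \<gamma> ^ m dvd x"
proof (cases "x = 0")
  case True then show ?thesis by (simp add: nu_def)
next
  case False
  define m' where "m' = (GREATEST m. \<gamma> ^ m dvd x)"
  note M = max_dvd[OF False, folded m'_def]
  have "(GREATEST m. m < nil_index \<gamma> \<and> (\<exists>\<beta>. \<beta> dvd 1 \<and> x = \<gamma> ^ m * \<beta>)) = m'"
  proof (rule Greatest_equality)
    show "m' < nil_index \<gamma> \<and> (\<exists>\<beta>. \<beta> dvd 1 \<and> x = \<gamma> ^ m' * \<beta>)"
      using M(3,4) by (simp add: s_def)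
    fix y assume "y < nil_index \<gamma> \<and> (\<exists>\<beta>. \<beta> dvd 1 \<and> x = \<gamma> ^ y * \<beta>)"
    then show "y \<le> m'" using M(2) by auto
  qed
  then have "nu \<gamma> x = enat m'" using False by (simp add: nu_def)
  moreover have "m \<le> m' \<longleftrightarrow> \<gamma> ^ m dvd x"
    using M(1,2) dvd_trans[OF le_imp_power_dvd M(1)] by blast
  ultimately show ?thesis by simp
qed

lemma decomp: "x \<noteq> 0 \<Longrightarrow> \<exists>t \<beta>. t < s \<and> \<beta> dvd 1 \<and> x = \<gamma> ^ t * \<beta>"
proof -
  assume x: "x \<noteq> 0"
  show ?thesis using max_dvd(3,4)[OF x] by blast
qed

end

lemma enat_ext_le: "(\<And>m. enat m \<le> a \<longleftrightarrow> enat m \<le> b) \<Longrightarrow> a = (b::enat)"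
proof -
  assume h: "\<And>m. enat m \<le> a \<longleftrightarrow> enat m \<le> b"
  show ?thesis
  proof (cases a)
    case (enat p)
    show ?thesis
    proof (cases b)
      case (enat q)
      then show ?thesis using h[of p] h[of q] \<open>a = enat p\<close> by simp
    next
      case infinity
      then show ?thesis using h[of "Suc p"] \<open>a = enat p\<close> by simp
    qed
  next
    case infinity
    show ?thesis
    proof (cases b)
      case (enat q)
      then show ?thesis using h[of "Suc q"] \<open>a = \<infinity>\<close> by simp
    qed (use infinity in simp)
  qed
qed


lemma indep:
  fixes u :: "nat \<Rightarrow> nat \<Rightarrow> 'a::comm_ring_1"
  assumes fin: "finite (UNIV :: 'a set)"
    and ct: "code_type_free n k C"
    and gm: "generator_matrix n k u C"
    and z: "(\<Sum>i<k. smult_vec (\<beta> i) (u i)) = 0"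
    and j: "j < k"
  shows "\<beta> j = 0"
proof -
  define \<phi> where "\<phi> = (\<lambda>\<beta>. (\<Sum>i<k. smult_vec (\<beta> i) (u i)))"
  define tr where "tr = (\<lambda>\<beta>::nat\<Rightarrow>'a. (\<lambda>i. if i < k then \<beta> i else 0))"
  have \<phi>tr: "\<phi> (tr b) = \<phi> b" for b unfolding \<phi>_def tr_def by (rule sum.cong) auto
  have trv: "tr b \<in> vecs k" for b unfolding tr_def vecs_def by auto
  have C: "C = {\<phi> a | a. True}" using gm unfolding generator_matrix_def \<phi>_def by blast
  have img: "\<phi> ` vecs k = C"
  proof
    show "\<phi> ` vecs k \<subseteq> C" using C by auto
    show "C \<subseteq> \<phi> ` vecs k"
    proof
      fix c assume "c \<in> C"
      then obtain a where "c = \<phi> a" using C by auto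
      then have "c = \<phi> (tr a)" using \<phi>tr by simp
      then show "c \<in> \<phi> ` vecs k" using trv by blast
    qed
  qed
  have finv: "finite (vecs k :: (nat \<Rightarrow> 'a) set)"
  proof -
    have inj: "inj_on (\<lambda>v::nat\<Rightarrow>'a. map v [0..<k]) (vecs k)"
    proof
      fix v w :: "nat \<Rightarrow> 'a"
      assume v: "v \<in> vecs k" and w: "w \<in> vecs k" and e: "map v [0..<k] = map w [0..<k]"
      show "v = w"
      proof
        fix i show "v i = w i"
        proof (cases "i < k")
          case True
          from e have "map v [0..<k] ! i = map w [0..<k] ! i" by (rule arg_cong[where f="\<lambda>xs. xs ! i"])
          then show ?thesis using True by simp
        next
          case False then show ?thesis using v w by (simp add: vecs_def)
        qed
      qed
    qed
    have "(\<lambda>v::nat\<Rightarrow>'a. map v [0..<k]) ` vecs k \<subseteq> {xs. set xs \<subseteq> UNIV \<and> length xs = k}" by auto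
    then have "finite ((\<lambda>v::nat\<Rightarrow>'a. map v [0..<k]) ` vecs k)"
      by (rule finite_subset[OF _ finite_lists_length_eq[OF fin, of k]])
    then show ?thesis by (rule finite_imageD[OF _ inj])
  qed
  from ct obtain f where "bij_betw f (vecs k :: (nat \<Rightarrow> 'a) set) C" unfolding code_type_free_def by blast
  then have "card (vecs k :: (nat \<Rightarrow> 'a) set) = card C" by (rule bij_betw_same_card)
  then have inj: "inj_on \<phi> (vecs k)" by (intro eq_card_imp_inj_on finv) (simp add: img)
  have \<phi>0: "\<phi> (\<lambda>_. 0) = 0" unfolding \<phi>_def smult_vec_def by (simp add: fun_eq_iff fun_sum_apply)
  have "\<phi> (tr \<beta>) = \<phi> (\<lambda>_. 0)" using \<phi>tr z \<phi>0 by (simp add: \<phi>_def)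
  moreover have "(\<lambda>_. 0) \<in> vecs k" by (simp add: vecs_def)
  ultimately have "tr \<beta> = (\<lambda>_. 0)" by (rule inj_onD[OF inj _ trv])
  moreover have "\<beta> j = tr \<beta> j" using j by (simp add: tr_def)
  ultimately show ?thesis by simp
qed

theorem lemma3p8:
  fixes \<gamma> :: "'a::comm_ring_1"
    and C :: "(nat \<Rightarrow> 'a) set"
    and u :: "nat \<Rightarrow> nat \<Rightarrow> 'a"
    and c :: "nat \<Rightarrow> 'a"
    and \<alpha> :: "nat \<Rightarrow> 'a"
  assumes "finite_chain_ring TYPE('a)"
    and "maximal_ideal (principal_ideal \<gamma>)"
    and "code_type_free n k C"
    and "generator_matrix n k u C"
    and "c \<in> C"
    and "c = (\<Sum>i<k. smult_vec (\<alpha> i) (u i))"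
  shows "nu_vec \<gamma> n c = (INF i\<in>{..<k}. nu \<gamma> (\<alpha> i))"
proof -
  interpret chainR \<gamma> using assms(1,2) by unfold_locales
  have fin: "finite (UNIV :: 'a set)" using assms(1) by (simp add: finite_chain_ring_def)
  have cv: "c \<in> vecs n" using assms(3,5) unfolding code_type_free_def linear_code_def by blast
  have ci: "c i = (\<Sum>j<k. \<alpha> j * u j i)" for i
    using assms(6) by (simp add: fun_sum_apply smult_vec_def)
  have key: "(\<forall>i<n. \<gamma> ^ m dvd c i) \<longleftrightarrow> (\<forall>i<k. \<gamma> ^ m dvd \<alpha> i)" for m
  proof
    assume "\<forall>i<k. \<gamma> ^ m dvd \<alpha> i"
    then show "\<forall>i<n. \<gamma> ^ m dvd c i" unfolding ci by (auto intro!: dvd_sum)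
  next
    assume H: "\<forall>i<n. \<gamma> ^ m dvd c i"
    show "\<forall>i<k. \<gamma> ^ m dvd \<alpha> i"
    proof (intro allI impI)
      fix j assume j: "j < k"
      show "\<gamma> ^ m dvd \<alpha> j"
      proof (rule ccontr)
        assume nd: "\<not> \<gamma> ^ m dvd \<alpha> j"
        then have "\<alpha> j \<noteq> 0" by auto
        then obtain t \<epsilon> where t: "t < s" "\<epsilon> dvd 1" "\<alpha> j = \<gamma> ^ t * \<epsilon>" using decomp[OF \<open>\<alpha> j \<noteq> 0\<close>] by blast
        have tm: "t < m"
        proof (rule ccontr)
          assume "\<not> t < m"
          then have "\<gamma> ^ m dvd \<gamma> ^ t" by (simp add: le_imp_power_dvd)
          then show False using nd t(3) by (metis dvd_mult2)
        qed
        define e where "e = s - 1 - t"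
        define \<beta> where "\<beta> = (\<lambda>i. \<gamma> ^ e * \<alpha> i)"
        have "(\<Sum>i<k. smult_vec (\<beta> i) (u i)) = 0"
        proof
          fix i
          have "(\<Sum>l<k. smult_vec (\<beta> l) (u l)) i = \<gamma> ^ e * c i"
            unfolding ci fun_sum_apply smult_vec_def \<beta>_def by (simp add: sum_distrib_left mult.assoc)
          also have "\<dots> = 0"
          proof (cases "i < n")
            case True
            then obtain w where "c i = \<gamma> ^ m * w" using H by (auto simp: dvd_def)
            moreover have "\<gamma> ^ (e + m) = 0" using tm t(1) by (intro pow_big) (simp add: e_def)
            ultimately show ?thesis by (simp add: power_add mult.assoc[symmetric])
          next
            case False then show ?thesis using cv by (simp add: vecs_def)
          qed
          finally show "(\<Sum>l<k. smult_vec (\<beta> l) (u l)) i = 0 i" by simp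
        qed
        then have "\<beta> j = 0" using indep[OF fin assms(3,4) _ j] by blast
        then have "\<gamma> ^ (e + t) * \<epsilon> = 0" unfolding \<beta>_def t(3) by (simp add: power_add mult.assoc)
        moreover have "e + t = s - 1" using t(1) by (simp add: e_def)
        ultimately have "\<gamma> ^ (s - 1) * \<epsilon> = 0" by simp
        moreover obtain v where "1 = \<epsilon> * v" using t(2) by (auto simp: dvd_def)
        ultimately have "\<gamma> ^ (s - 1) = 0"
          by (metis mult.assoc mult_1_right mult_zero_left)
        moreover have "s - 1 < s" using s_pos by simp
        ultimately show False using gt_ne by blast
      qed
    qed
  qed
  show ?thesis
  proof (rule enat_ext_le)
    fix m
    have "enat m \<le> nu_vec \<gamma> n c \<longleftrightarrow> (\<forall>i\<in>{..<n}. enat m \<le> nu \<gamma> (c i))"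
      unfolding nu_vec_def by (rule le_INF_iff)
    also have "\<dots> \<longleftrightarrow> (\<forall>i<n. \<gamma> ^ m dvd c i)"
      unfolding Ball_def lessThan_iff nu_ge_iff by (rule refl)
    also have "\<dots> \<longleftrightarrow> (\<forall>i<k. \<gamma> ^ m dvd \<alpha> i)" by (rule key)
    also have "\<dots> \<longleftrightarrow> (\<forall>i\<in>{..<k}. enat m \<le> nu \<gamma> (\<alpha> i))"
      unfolding Ball_def lessThan_iff nu_ge_iff by (rule refl)
    also have "\<dots> \<longleftrightarrow> enat m \<le> (INF i\<in>{..<k}. nu \<gamma> (\<alpha> i))"
      by (rule le_INF_iff[symmetric])
    finally show "enat m \<le> nu_vec \<gamma> n c \<longleftrightarrow> enat m \<le> (INF i\<in>{..<k}. nu \<gamma> (\<alpha> i))" .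
  qed
qed

end
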